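(* There exists a list $I=(x_1,\ldots,x_n)$ of items with sizes in $(0,1]$ such that $$\mathbb{E}[\mathrm{BF}(I^\sigma)] = \frac{13}{10}\,\mathrm{OPT}(I),$$ where $\sigma$ is drawn uniformly at random from the set $\mathcal{S}_n$ of permutations of $[n]$.
   Context: Bin packing: items with sizes in $(0,1]$ are packed into unit-capacity bins (total size per bin at most $1$); $\mathrm{OPT}(I)$ is the minimum number of bins for list $I$. The online algorithm Best Fit (BF) processes the items in the given order and packs the current item into the fullest bin (largest current load) into which it fits, opening a new bin if it fits into no existing bin; items are never moved. $\mathrm{BF}(I)$ denotes the number of bins Best Fit uses on list $I$. For $\sigma\in\mathcal{S}_n$, $I^\sigma=(x_{\sigma(1)},\ldots,x_{\sigma(n)})$. *)

theory Defs
  imports "HOL-Analysis.Analysis" "HOL-Combinatorics.Permutations"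
begin

text \<open>The state is the list of current bin loads (one entry per open bin). Ties between equally full bins do not matter for
  the resulting multiset of loads, so we choose the first such bin.\<close>

definition bf_step :: "real list \<Rightarrow> real \<Rightarrow> real list" where
  "bf_step loads x =
     (let fits = filter (\<lambda>j. loads ! j + x \<le> 1) [0..<length loads] in
      if fits = [] then loads @ [x]
      else let m = Max ((\<lambda>j. loads ! j) ` set fits);
               j = hd (filter (\<lambda>j. loads ! j = m) fits)
           in loads[j := loads ! j + x])"

definition bf_loads :: "real list \<Rightarrow> real list" where
  "bf_loads xs = foldl bf_step [] xs"

definition BF :: "real list \<Rightarrow> nat" where
  "BF xs = length (bf_loads xs)"

definition feasible_packing :: "real list \<Rightarrow> nat \<Rightarrow> (nat \<Rightarrow> nat) \<Rightarrow> bool" where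
  "feasible_packing xs k f \<longleftrightarrow>
     (\<forall>i<length xs. f i < k) \<and>
     (\<forall>b<k. (\<Sum>i\<in>{i. i < length xs \<and> f i = b}. xs ! i) \<le> 1)"

definition OPT :: "real list \<Rightarrow> nat" where
  "OPT xs = (LEAST k. \<exists>f. feasible_packing xs k f)"

text \<open>I^\<sigma> = (x_{\<sigma>(1)},...,x_{\<sigma>(n)}), with 0-based indices.\<close>
definition permute_list_by :: "(nat \<Rightarrow> nat) \<Rightarrow> real list \<Rightarrow> real list" where
  "permute_list_by \<sigma> xs = map (\<lambda>i. xs ! \<sigma> i) [0..<length xs]"

definition expected_BF :: "real list \<Rightarrow> real" where
  "expected_BF xs =
     (\<Sum>\<sigma>\<in>{\<sigma>. \<sigma> permutes {..<length xs}}. real (BF (permute_list_by \<sigma> xs)))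
       / real (card {\<sigma>. \<sigma> permutes {..<length xs}})"

end

theory Submission
  imports Defs "HOL-Combinatorics.Multiset_Permutations"
begin

lemma bij_perm_list:
  "bij_betw (\<lambda>\<sigma>. map \<sigma> [0..<n]) {\<sigma>. \<sigma> permutes {..<n}} (permutations_of_set {..<n})"
  unfolding bij_betw_def
proof (intro conjI)
  show "inj_on (\<lambda>\<sigma>. map \<sigma> [0..<n]) {\<sigma>. \<sigma> permutes {..<n}}"
  proof (rule inj_onI)
    fix \<sigma> \<tau> assume s: "\<sigma> \<in> {\<sigma>. \<sigma> permutes {..<n}}" and t: "\<tau> \<in> {\<sigma>. \<sigma> permutes {..<n}}"
      and eq: "map \<sigma> [0..<n] = map \<tau> [0..<n]"
    show "\<sigma> = \<tau>"
    proof
      fix i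
      show "\<sigma> i = \<tau> i"
      proof (cases "i < n")
        case True
        then show ?thesis using eq by (metis map_eq_conv atLeastLessThan_iff set_upt zero_le)
      next
        case False
        then show ?thesis using s t by (simp add: permutes_not_in)
      qed
    qed
  qed
  show "(\<lambda>\<sigma>. map \<sigma> [0..<n]) ` {\<sigma>. \<sigma> permutes {..<n}} = permutations_of_set {..<n}"
  proof
    show "(\<lambda>\<sigma>. map \<sigma> [0..<n]) ` {\<sigma>. \<sigma> permutes {..<n}} \<subseteq> permutations_of_set {..<n}"
    proof clarsimp
      fix \<sigma> assume p: "\<sigma> permutes {..<n}"
      have "distinct (map \<sigma> [0..<n])"
        using permutes_inj_on[OF p] by (simp add: distinct_map inj_on_subset lessThan_atLeast0)
      moreover have "set (map \<sigma> [0..<n]) = {..<n}"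
        using permutes_image[OF p] by (simp add: lessThan_atLeast0)
      ultimately show "map \<sigma> [0..<n] \<in> permutations_of_set {..<n}"
        by (simp add: permutations_of_set_def)
    qed
    show "permutations_of_set {..<n} \<subseteq> (\<lambda>\<sigma>. map \<sigma> [0..<n]) ` {\<sigma>. \<sigma> permutes {..<n}}"
    proof
      fix L assume L: "L \<in> permutations_of_set {..<n}"
      have len: "length L = n" using length_finite_permutations_of_set[OF L] by simp
      have d: "distinct L" and sL: "set L = {..<n}" using L by (auto simp: permutations_of_set_def)
      define \<sigma> where "\<sigma> = (\<lambda>i. if i < n then L ! i else i)"
      have b0: "bij_betw ((!) L) {..<n} {..<n}" using bij_betw_nth[OF d] len sL by simp
      have "bij_betw \<sigma> {..<n} {..<n}"
        using b0 by (rule bij_betw_cong[THEN iffD1, rotated]) (simp add: \<sigma>_def)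
      then have p: "\<sigma> permutes {..<n}"
        by (rule bij_imp_permutes) (simp add: \<sigma>_def)
      have "map \<sigma> [0..<n] = L" by (rule nth_equalityI) (simp_all add: len \<sigma>_def)
      then show "L \<in> (\<lambda>\<sigma>. map \<sigma> [0..<n]) ` {\<sigma>. \<sigma> permutes {..<n}}" using p by blast
    qed
  qed
qed

lemma sum_perms:
  assumes "finite A" "A \<noteq> {}"
  shows "sum f (permutations_of_set A) =
         (\<Sum>x\<in>A. sum (\<lambda>xs. f (x # xs)) (permutations_of_set (A - {x})))"
proof -
  have "sum f (permutations_of_set A) =
        sum f (\<Union>x\<in>A. (\<lambda>xs. x # xs) ` permutations_of_set (A - {x}))"
    using permutations_of_set_nonempty[OF assms(2)] by simp
  also have "\<dots> = (\<Sum>x\<in>A. sum f ((\<lambda>xs. x # xs) ` permutations_of_set (A - {x})))"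
    by (rule sum.UNION_disjoint) (use assms in auto)
  also have "\<dots> = (\<Sum>x\<in>A. sum (\<lambda>xs. f (x # xs)) (permutations_of_set (A - {x})))"
    by (rule sum.cong) (auto simp: sum.reindex inj_on_def)
  finally show ?thesis .
qed

fun picks :: "'a list \<Rightarrow> ('a \<times> 'a list) list" where
  "picks [] = []"
| "picks (x # xs) = (x, xs) # map (\<lambda>(y, ys). (y, x # ys)) (picks xs)"

fun perms :: "'b list \<Rightarrow> 'a list \<Rightarrow> 'a list list" where
  "perms [] xs = [[]]"
| "perms (f # fs) xs = concat (map (\<lambda>(y, ys). map ((#) y) (perms fs ys)) (picks xs))"

lemma picks_distinct: "distinct xs \<Longrightarrow> picks xs = map (\<lambda>y. (y, remove1 y xs)) xs"
proof (induction xs)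
  case Nil then show ?case by simp
next
  case (Cons x xs)
  have "map (\<lambda>y. (y, remove1 y (x # xs))) xs = map (\<lambda>y. (y, x # remove1 y xs)) xs"
    using Cons.prems by (intro map_cong refl) auto
  then show ?case using Cons by (simp add: o_def)
qed

lemma sum_list_concat': "sum_list (concat xss) = sum_list (map sum_list xss)"
  for xss :: "real list list"
  by (induction xss) simp_all

lemma sum_perms_list:
  fixes g :: "'a list \<Rightarrow> real"
  shows "distinct xs \<Longrightarrow> length fs = length xs \<Longrightarrow>
   sum g (permutations_of_set (set xs)) = sum_list (map g (perms fs xs))"
proof (induction fs arbitrary: xs g)
  case Nil then show ?case by simp
next
  case (Cons f fs)
  then have ne: "set xs \<noteq> {}" by auto
  have "sum g (permutations_of_set (set xs)) =
        (\<Sum>x\<in>set xs. sum (\<lambda>l. g (x # l)) (permutations_of_set (set xs - {x})))"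
    by (rule sum_perms) (use ne in auto)
  also have "\<dots> = (\<Sum>x\<in>set xs. sum_list (map (\<lambda>l. g (x # l)) (perms fs (remove1 x xs))))"
  proof (rule sum.cong[OF refl])
    fix x assume "x \<in> set xs"
    then have "set xs - {x} = set (remove1 x xs)" using Cons.prems by (simp add: set_remove1_eq)
    moreover have "distinct (remove1 x xs)" using Cons.prems by simp
    moreover have "length fs = length (remove1 x xs)" using Cons.prems \<open>x \<in> set xs\<close>
      by (simp add: length_remove1)
    ultimately show "sum (\<lambda>l. g (x # l)) (permutations_of_set (set xs - {x})) =
       sum_list (map (\<lambda>l. g (x # l)) (perms fs (remove1 x xs)))"
      using Cons.IH by simp
  qed
  also have "\<dots> = sum_list (map (\<lambda>x. sum_list (map (\<lambda>l. g (x # l)) (perms fs (remove1 x xs)))) xs)"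
    using Cons.prems by (simp add: sum_list_distinct_conv_sum_set)
  also have "\<dots> = sum_list (map g (perms (f # fs) xs))"
    using Cons.prems by (simp add: picks_distinct sum_list_concat' map_concat o_def)
  finally show ?case .
qed

lemma BF0: "BF [1/3, 1/3, 1/3, 5/12, 5/12] = 2"
  by (simp add: BF_def bf_loads_def bf_step_def upt_rec Let_def)

lemma BF1: "BF [1/3, 1/3, 5/12, 1/3, 5/12] = 2"
  by (simp add: BF_def bf_loads_def bf_step_def upt_rec Let_def)

lemma BF2: "BF [1/3, 1/3, 5/12, 5/12, 1/3] = 2"
  by (simp add: BF_def bf_loads_def bf_step_def upt_rec Let_def)

lemma BF3: "BF [1/3, 5/12, 1/3, 1/3, 5/12] = 3"
  by (simp add: BF_def bf_loads_def bf_step_def upt_rec Let_def)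

lemma BF4: "BF [1/3, 5/12, 1/3, 5/12, 1/3] = 3"
  by (simp add: BF_def bf_loads_def bf_step_def upt_rec Let_def)

lemma BF5: "BF [1/3, 5/12, 5/12, 1/3, 1/3] = 3"
  by (simp add: BF_def bf_loads_def bf_step_def upt_rec Let_def)

lemma BF6: "BF [5/12, 1/3, 1/3, 1/3, 5/12] = 3"
  by (simp add: BF_def bf_loads_def bf_step_def upt_rec Let_def)

lemma BF7: "BF [5/12, 1/3, 1/3, 5/12, 1/3] = 3"
  by (simp add: BF_def bf_loads_def bf_step_def upt_rec Let_def)

lemma BF8: "BF [5/12, 1/3, 5/12, 1/3, 1/3] = 3"
  by (simp add: BF_def bf_loads_def bf_step_def upt_rec Let_def)

lemma BF9: "BF [5/12, 5/12, 1/3, 1/3, 1/3] = 2"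
  by (simp add: BF_def bf_loads_def bf_step_def upt_rec Let_def)

definition xs0 :: "real list" where "xs0 = [1/3, 1/3, 1/3, 5/12, 5/12]"
lemma sum312: "(\<Sum>L\<in>permutations_of_set {0,1,2,3,4::nat}. real (BF (map ((!) xs0) L))) = 312"
proof -
  have "{0,1,2,3,4::nat} = set [0,1,2,3,4]" by simp
  have "(\<Sum>L\<in>permutations_of_set {0,1,2,3,4::nat}. real (BF (map ((!) xs0) L))) =
     sum_list (map (\<lambda>L. real (BF (map ((!) xs0) L))) (perms [0,1,2,3,4::nat] [0,1,2,3,4::nat]))"
    unfolding \<open>{0,1,2,3,4::nat} = set [0,1,2,3,4]\<close> by (rule sum_perms_list) simp_all
  also have "\<dots> = 312"
    by (simp add: xs0_def BF0 BF1 BF2 BF3 BF4 BF5 BF6 BF7 BF8 BF9)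
  finally show ?thesis .
qed

lemma OPT_xs0: "OPT xs0 = 2"
  unfolding OPT_def
proof (rule Least_equality)
  have e0: "{i. i < length xs0 \<and> (if i < 3 then 0 else 1::nat) = 0} = {0,1,2}"
    by (auto simp: xs0_def)
  have e1: "{i. i < length xs0 \<and> (if i < 3 then 0 else 1::nat) = 1} = {3,4}"
    by (auto simp: xs0_def)
  have "feasible_packing xs0 2 (\<lambda>i. if i < 3 then 0 else 1)"
    unfolding feasible_packing_def
  proof (intro conjI allI impI)
    fix b :: nat assume "b < 2"
    then have "b = 0 \<or> b = 1" by auto
    then show "(\<Sum>i\<in>{i. i < length xs0 \<and> (if i < 3 then 0 else 1) = b}. xs0 ! i) \<le> 1"
    proof
      assume b: "b = 0"
      show ?thesis by (simp only: b e0) (simp add: xs0_def)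
    next
      assume b: "b = 1"
      show ?thesis by (simp only: b e1) (simp add: xs0_def)
    qed
  qed simp
  then show "\<exists>f. feasible_packing xs0 2 f" by blast
next
  fix k assume "\<exists>f. feasible_packing xs0 k f"
  then obtain f where f: "feasible_packing xs0 k f" by blast
  show "2 \<le> k"
  proof (rule ccontr)
    assume "\<not> 2 \<le> k"
    then have "k = 0 \<or> k = 1" by auto
    then show False
    proof
      assume "k = 0" then show False using f by (auto simp: feasible_packing_def xs0_def)
    next
      assume k1: "k = 1"
      have "\<forall>i<5. f i = 0" using f k1 by (auto simp: feasible_packing_def xs0_def)
      then have "{i. i < length xs0 \<and> f i = 0} = {0,1,2,3,4}" by (auto simp: xs0_def)
      moreover have "(\<Sum>i\<in>{i. i < length xs0 \<and> f i = 0}. xs0 ! i) \<le> 1"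
        using f k1 by (auto simp: feasible_packing_def)
      ultimately show False by (simp add: xs0_def)
    qed
  qed
qed

lemma sum_xs0: "(\<Sum>\<sigma>\<in>{\<sigma>. \<sigma> permutes {..<length xs0}}. real (BF (permute_list_by \<sigma> xs0))) = 312"
proof -
  have "(\<Sum>\<sigma>\<in>{\<sigma>. \<sigma> permutes {..<length xs0}}. real (BF (permute_list_by \<sigma> xs0)))
      = (\<Sum>\<sigma>\<in>{\<sigma>. \<sigma> permutes {..<5}}. (\<lambda>L. real (BF (map ((!) xs0) L))) (map \<sigma> [0..<5]))"
  proof -
    have len: "length xs0 = 5" by (simp add: xs0_def)
    show ?thesis unfolding len by (intro sum.cong refl) (simp add: permute_list_by_def len o_def)
  qed
  also have "\<dots> = (\<Sum>L\<in>permutations_of_set {..<5}. real (BF (map ((!) xs0) L)))"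
    by (rule sum.reindex_bij_betw[OF bij_perm_list])
  also have "{..<5::nat} = {0,1,2,3,4}" by auto
  also have "(\<Sum>L\<in>permutations_of_set {0,1,2,3,4::nat}. real (BF (map ((!) xs0) L))) = 312"
    by (rule sum312)
  finally show ?thesis .
qed

theorem lemma16:
  shows "\<exists>xs :: real list. xs \<noteq> [] \<and> (\<forall>x\<in>set xs. 0 < x \<and> x \<le> 1) \<and>
           expected_BF xs = 13 / 10 * real (OPT xs)"
proof (intro exI conjI)
  show "xs0 \<noteq> []" by (simp add: xs0_def)
  show "\<forall>x\<in>set xs0. 0 < x \<and> x \<le> 1" by (simp add: xs0_def)
  have c: "card {\<sigma>. \<sigma> permutes {..<length xs0}} = 120"
    by (subst card_permutations[of _ 5]) (simp_all add: xs0_def fact_numeral)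
  show "expected_BF xs0 = 13 / 10 * real (OPT xs0)"
    unfolding expected_BF_def c sum_xs0 OPT_xs0 by simp
qed

end
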